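(* Let $\tilde\beta$ be a minimizer over $b\in\mathbb R^q$ of $G(b;\lambda_2)=\frac1{2n}\|y-Xb\|^2+\frac12\lambda_2b'Lb$, where $\lambda_2\ge0$, and let $\tilde r=y-X\tilde\beta$. Then (i) $\lambda_2\max_{1\le j\le q}|d_j\tilde\beta_j-a_j'\tilde\beta|\le\|\tilde r\|\le\|y\|$ (equivalently, when all $d_j>0$, $\lambda_2\max_j d_j|\tilde\beta_j-a_j'\tilde\beta/d_j|\le\|\tilde r\|\le\|y\|$); (ii) for all $1\le j,k\le q$, $\lambda_2\,|d_j\tilde\beta_j-a_j'\tilde\beta-(d_k\tilde\beta_k-a_k'\tilde\beta)|\le\frac1n\|x_j-x_k\|\,\|y\|$.
   Context: $y\in\mathbb R^n$, $X=(x_1,\dots,x_q)\in\mathbb R^{n\times q}$ with $\|x_j\|^2=n$ for all $j$. $A=(a_{jk})$ is a symmetric $q\times q$ real matrix with zero diagonal, $a_j$ denotes its $j$th row (as a column vector), $d_j=\sum_k|a_{jk}|$, $L=\operatorname{diag}(d_1,\dots,d_q)-A$, so that $b'Lb=\sum_{j<k}|a_{jk}|(b_j-\operatorname{sgn}(a_{jk})b_k)^2$ and $(Lb)_j=d_jb_j-a_j'b$. *)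

theory Defs
  imports "HOL-Analysis.Analysis"
begin

definition degvec :: "real^'q^'q \<Rightarrow> real^'q" where
  "degvec A = (\<chi> j. \<Sum>k\<in>UNIV. \<bar>A $ j $ k\<bar>)"

definition laplacian :: "real^'q^'q \<Rightarrow> real^'q^'q" where
  "laplacian A = (\<chi> j k. (if j = k then degvec A $ j else 0) - A $ j $ k)"

definition Gobj :: "real^'n \<Rightarrow> real^'q^'n \<Rightarrow> real^'q^'q \<Rightarrow> real \<Rightarrow> real^'q \<Rightarrow> real" where
  "Gobj y X A lam2 b =
     (1 / (2 * real CARD('n))) * (norm (y - X *v b))\<^sup>2 + (1/2) * lam2 * (b \<bullet> (laplacian A *v b))"

end

theory Submission
  imports Defs
begin

lemma quad_zero:
  fixes a c :: real
  assumes "\<forall>t. 0 \<le> t*a + t^2*c"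
  shows "a = 0"
proof (cases "c \<le> 0")
  case True
  have "0 \<le> (-a)*a + (-a)^2*c" using assms by blast
  moreover have "(-a)^2*c \<le> 0" using True by (simp add: mult_nonneg_nonpos)
  ultimately have "a*a \<le> 0" by simp
  thus ?thesis by (metis mult_eq_0_iff mult_le_0_iff not_square_less_zero order_antisym_conv zero_le_square)
next
  case False
  hence c: "c > 0" by simp
  have "0 \<le> (-a/(2*c))*a + (-a/(2*c))^2*c" using assms by blast
  also have "\<dots> = - (a^2/(4*c))" using c by (simp add: field_simps power2_eq_square)
  finally have "a^2/(4*c) \<le> 0" by simp
  hence "a^2 \<le> 0" using c by (simp add: divide_le_0_iff)
  thus ?thesis by simp
qed

lemma lap_sym:
  assumes "transpose A = A"
  shows "transpose (laplacian A) = laplacian A"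
proof -
  have s: "\<And>j k. A $ j $ k = A $ k $ j" using assms by (metis transpose_def vec_lambda_beta)
  show ?thesis unfolding transpose_def laplacian_def
    by (simp add: vec_eq_iff s)
qed

lemma lap_component:
  "(laplacian A *v b) $ j = degvec A $ j * b $ j - (A $ j) \<bullet> b"
proof -
  have "(laplacian A *v b) $ j = (\<Sum>k\<in>UNIV. (if j = k then degvec A $ j * b $ k else 0) - A $ j $ k * b $ k)"
    unfolding laplacian_def matrix_vector_mult_def
    by (auto intro!: sum.cong simp: algebra_simps)
  also have "\<dots> = degvec A $ j * b $ j - (A $ j) \<bullet> b"
    unfolding inner_vec_def by (simp add: sum_subtractf)
  finally show ?thesis .
qed

lemma lap_nonneg:
  assumes "transpose A = A"
  shows "0 \<le> b \<bullet> (laplacian A *v b)"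
proof -
  have s: "\<And>j k. A $ j $ k = A $ k $ j" using assms by (metis transpose_def vec_lambda_beta)
  define f where "f j k = \<bar>A$j$k\<bar> * (b$j)^2 - A$j$k * b$j * b$k" for j k
  have e: "b \<bullet> (laplacian A *v b) = (\<Sum>j\<in>UNIV. \<Sum>k\<in>UNIV. f j k)"
    unfolding inner_vec_def lap_component degvec_def f_def inner_vec_def
    by (simp add: sum_distrib_left sum_distrib_right sum_subtractf right_diff_distrib
        power2_eq_square mult.assoc mult.left_commute mult.commute)
  have sw: "(\<Sum>j\<in>UNIV. \<Sum>k\<in>UNIV. f j k) = (\<Sum>j\<in>UNIV. \<Sum>k\<in>UNIV. f k j)"
    by (rule sum.swap)
  have p: "0 \<le> f j k + f k j" for j k
  proof -
    have "f j k + f k j = \<bar>A$j$k\<bar> * ((b$j)^2 + (b$k)^2) - 2 * A$j$k * b$j * b$k"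
      unfolding f_def using s[of k j] by (simp add: algebra_simps)
    moreover have "2 * A$j$k * b$j * b$k \<le> \<bar>A$j$k\<bar> * (2*\<bar>b$j * b$k\<bar>)"
    proof -
      have "2 * A$j$k * b$j * b$k \<le> \<bar>2 * A$j$k * b$j * b$k\<bar>" by simp
      also have "\<dots> = \<bar>A$j$k\<bar> * (2*\<bar>b$j * b$k\<bar>)" by (simp add: abs_mult)
      finally show ?thesis .
    qed
    moreover have "2*\<bar>b$j * b$k\<bar> \<le> (b$j)^2 + (b$k)^2"
      using sum_squares_bound[of "\<bar>b$j\<bar>" "\<bar>b$k\<bar>"] by (simp add: abs_mult mult.assoc)
    ultimately show ?thesis by (smt (verit) abs_ge_zero mult_left_mono)
  qed
  have "2 * (b \<bullet> (laplacian A *v b)) = (\<Sum>j\<in>UNIV. \<Sum>k\<in>UNIV. f j k + f k j)"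
    using e sw by (simp add: sum.distrib)
  also have "\<dots> \<ge> 0" by (intro sum_nonneg p)
  finally show ?thesis by simp
qed

theorem proposition1:
  fixes y :: "real^'n" and X :: "real^'q^'n" and A :: "real^'q^'q"
    and lam2 :: real and beta :: "real^'q"
  assumes Xnorm: "\<forall>j. (norm (column j X))\<^sup>2 = real CARD('n)"
    and Asym: "transpose A = A"
    and Adiag: "\<forall>j. A $ j $ j = 0"
    and lam2: "lam2 \<ge> 0"
    and minim: "\<forall>b. Gobj y X A lam2 beta \<le> Gobj y X A lam2 b"
  shows "lam2 * Max ((\<lambda>j. \<bar>degvec A $ j * beta $ j - (A $ j) \<bullet> beta\<bar>) ` UNIV)
           \<le> norm (y - X *v beta)
       \<and> norm (y - X *v beta) \<le> norm y
       \<and> (\<forall>j k. lam2 * \<bar>degvec A $ j * beta $ j - (A $ j) \<bullet> beta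
                       - (degvec A $ k * beta $ k - (A $ k) \<bullet> beta)\<bar>
                 \<le> (1 / real CARD('n)) * norm (column j X - column k X) * norm y)"
proof -
  define n where "n = real CARD('n)"
  have n1: "n \<ge> 1" unfolding n_def by (simp add: Suc_leI)
  define r where "r = y - X *v beta"
  define L where "L = laplacian A"
  have Ls: "transpose L = L" unfolding L_def using Asym by (rule lap_sym)
  have Lsym: "u \<bullet> (L *v v) = v \<bullet> (L *v u)" for u v
    by (metis Ls dot_lmul_matrix inner_commute vector_transpose_matrix)
  have stat: "lam2 * (v \<bullet> (L *v beta)) = (1/n) * (r \<bullet> (X *v v))" for v
  proof -
    define a where "a = lam2 * (v \<bullet> (L *v beta)) - (1/n) * (r \<bullet> (X *v v))"
    define c where "c = (1/(2*n)) * ((X *v v) \<bullet> (X *v v)) + (1/2) * lam2 * (v \<bullet> (L *v v))"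
    have "0 \<le> t*a + t^2*c" for t
    proof -
      have "Gobj y X A lam2 (beta + t *\<^sub>R v) - Gobj y X A lam2 beta = t*a + t^2*c"
      proof -
        have yy: "y - X *v (beta + t *\<^sub>R v) = r - t *\<^sub>R (X *v v)"
          unfolding r_def by (simp add: algebra_simps)
        have q: "(beta + t *\<^sub>R v) \<bullet> (L *v (beta + t *\<^sub>R v))
           = beta \<bullet> (L *v beta) + 2 * t * (v \<bullet> (L *v beta)) + t^2 * (v \<bullet> (L *v v))"
          using Lsym[of beta v]
          by (simp add: algebra_simps inner_add_left inner_add_right power2_eq_square)
        have nn: "(norm (r - t *\<^sub>R (X *v v)))^2 = (norm r)^2 - 2*t*(r \<bullet> (X *v v)) + t^2 * ((X *v v) \<bullet> (X *v v))"
          unfolding power2_norm_eq_inner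
          by (simp add: inner_diff_left inner_diff_right inner_commute power2_eq_square algebra_simps)
        have G1: "Gobj y X A lam2 (beta + t *\<^sub>R v) = (1/(2*n)) * ((norm r)^2 - 2*t*(r \<bullet> (X *v v)) + t^2 * ((X *v v) \<bullet> (X *v v)))
            + (1/2) * lam2 * (beta \<bullet> (L *v beta) + 2 * t * (v \<bullet> (L *v beta)) + t^2 * (v \<bullet> (L *v v)))"
          using q nn unfolding Gobj_def yy L_def n_def by simp
        have G0: "Gobj y X A lam2 beta = (1/(2*n)) * (norm r)^2 + (1/2) * lam2 * (beta \<bullet> (L *v beta))"
          unfolding Gobj_def L_def n_def r_def ..
        show ?thesis
          unfolding G1 G0 a_def c_def using n1
          by (simp add: field_simps power2_eq_square)
      qed
      moreover have "Gobj y X A lam2 beta \<le> Gobj y X A lam2 (beta + t *\<^sub>R v)" using minim by blast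
      ultimately show ?thesis by simp
    qed
    hence "a = 0" by (intro quad_zero) blast
    thus ?thesis unfolding a_def by simp
  qed
  have statj: "lam2 * (degvec A $ j * beta $ j - (A $ j) \<bullet> beta) = (1/n) * (r \<bullet> column j X)" for j
  proof -
    have "axis j 1 \<bullet> (L *v beta) = degvec A $ j * beta $ j - (A $ j) \<bullet> beta"
      unfolding L_def by (simp add: inner_axis' lap_component)
    thus ?thesis using stat[of "axis j 1"] by (simp add: matrix_vector_mult_basis)
  qed
  have ncol: "norm (column j X) = sqrt n" for j
  proof -
    have "norm (column j X) = sqrt ((norm (column j X))^2)" by simp
    thus ?thesis using Xnorm unfolding n_def by simp
  qed
  have ry: "norm r \<le> norm y"
  proof -
    have "Gobj y X A lam2 beta \<le> Gobj y X A lam2 0" using minim by blast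
    hence "(1/(2*n)) * (norm r)^2 + (1/2)*lam2*(beta \<bullet> (L *v beta)) \<le> (1/(2*n)) * (norm y)^2"
      unfolding Gobj_def r_def L_def n_def by simp
    moreover have "0 \<le> lam2*(beta \<bullet> (L *v beta))"
      unfolding L_def using lam2 lap_nonneg[OF Asym] by simp
    ultimately have "(1/(2*n)) * (norm r)^2 \<le> (1/(2*n)) * (norm y)^2" by linarith
    hence "(norm r)^2 / (2*n) \<le> (norm y)^2 / (2*n)" by simp
    hence "(norm r)^2 \<le> (norm y)^2" using n1 by (simp add: divide_le_cancel)
    thus ?thesis by (rule power2_le_imp_le) simp
  qed
  have p1: "lam2 * \<bar>degvec A $ j * beta $ j - (A $ j) \<bullet> beta\<bar> \<le> norm r" for j
  proof -
    have "lam2 * \<bar>degvec A $ j * beta $ j - (A $ j) \<bullet> beta\<bar> = (1/n) * \<bar>r \<bullet> column j X\<bar>"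
    proof -
      have "\<bar>lam2 * (degvec A $ j * beta $ j - (A $ j) \<bullet> beta)\<bar> = \<bar>(1/n) * (r \<bullet> column j X)\<bar>"
        using statj[of j] by simp
      thus ?thesis using lam2 n1 by (simp add: abs_mult)
    qed
    also have "\<dots> \<le> (1/n) * (norm r * sqrt n)"
      using Cauchy_Schwarz_ineq2[of r "column j X"] ncol n1 by (simp add: divide_right_mono)
    also have "\<dots> \<le> norm r"
    proof -
      have s1: "1 \<le> sqrt n" using n1 by simp
      hence "sqrt n * 1 \<le> sqrt n * sqrt n" by (intro mult_left_mono) auto
      hence "sqrt n \<le> n" using n1 by simp
      hence "(1/n) * (norm r * sqrt n) \<le> (1/n) * (norm r * n)" using n1
        by (intro mult_left_mono) (auto intro: mult_left_mono)
      thus ?thesis using n1 by simp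
    qed
    finally show ?thesis .
  qed
  have part1: "lam2 * Max ((\<lambda>j. \<bar>degvec A $ j * beta $ j - (A $ j) \<bullet> beta\<bar>) ` UNIV) \<le> norm r"
  proof -
    obtain j where "Max ((\<lambda>j. \<bar>degvec A $ j * beta $ j - (A $ j) \<bullet> beta\<bar>) ` UNIV)
       = \<bar>degvec A $ j * beta $ j - (A $ j) \<bullet> beta\<bar>"
    proof -
      have "Max ((\<lambda>j. \<bar>degvec A $ j * beta $ j - (A $ j) \<bullet> beta\<bar>) ` UNIV)
          \<in> (\<lambda>j. \<bar>degvec A $ j * beta $ j - (A $ j) \<bullet> beta\<bar>) ` UNIV"
        by (rule Max_in) auto
      thus ?thesis using that by blast
    qed
    thus ?thesis using p1[of j] by simp
  qed
  have part3: "lam2 * \<bar>degvec A $ j * beta $ j - (A $ j) \<bullet> beta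
                       - (degvec A $ k * beta $ k - (A $ k) \<bullet> beta)\<bar>
                 \<le> (1 / n) * norm (column j X - column k X) * norm y" for j k
  proof -
    have "lam2 * \<bar>degvec A $ j * beta $ j - (A $ j) \<bullet> beta
                       - (degvec A $ k * beta $ k - (A $ k) \<bullet> beta)\<bar>
        = \<bar>lam2 * (degvec A $ j * beta $ j - (A $ j) \<bullet> beta)
                       - lam2 * (degvec A $ k * beta $ k - (A $ k) \<bullet> beta)\<bar>"
      using lam2 by (simp add: abs_mult right_diff_distrib[symmetric])
    also have "\<dots> = (1/n) * \<bar>r \<bullet> (column j X - column k X)\<bar>"
      unfolding statj using n1 by (simp add: inner_diff_right diff_divide_distrib[symmetric])
    also have "\<dots> \<le> (1/n) * (norm r * norm (column j X - column k X))"
      using Cauchy_Schwarz_ineq2[of r "column j X - column k X"] n1 by (intro mult_left_mono) auto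
    also have "\<dots> \<le> (1/n) * (norm y * norm (column j X - column k X))"
      using ry n1 by (simp add: divide_right_mono mult_right_mono)
    finally show ?thesis by (simp add: mult.commute)
  qed
  show ?thesis using part1 ry part3 unfolding r_def n_def by blast
qed

end
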